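(* Let $A=\langle Q,F,\delta,\gamma\rangle$ be a finite and fork-acyclic pomset automaton. For every $q\in Q$ one can construct a series-rational expression $e_q$ such that $[\![e_q]\!]=L_A(q)$.
   Context: Fix a finite alphabet $\Sigma$. Pomsets are isomorphism classes of finite labelled posets over $\Sigma$; $1$ is the empty pomset; sequential composition $U\cdot V$ is the disjoint union with all elements of $U$ below all elements of $V$; parallel composition $U\parallel V$ is the disjoint union of orders. $\mathsf{SP}(\Sigma)$ is the smallest set containing $1$ and the one-element pomsets $a\in\Sigma$ closed under $\cdot,\parallel$; these operations lift pointwise to sets, and $L^*=\bigcup_n L^n$ with $L^0=\{1\}$, $L^{n+1}=L\cdot L^n$. Series-rational expressions: $e,f::=0\mid 1\mid a\in\Sigma\mid e+f\mid e\cdot f\mid e\parallel f\mid e^*$ with $[\![0]\!]=\emptyset$, $[\![1]\!]=\{1\}$, $[\![a]\!]=\{a\}$, $[\![e+f]\!]=[\![e]\!]\cup[\![f]\!]$, $[\![e\cdot f]\!]=[\![e]\!]\cdot[\![f]\!]$, $[\![e\parallel f]\!]=[\![e]\!]\parallel[\![f]\!]$, $[\![e^*]\!]=[\![e]\!]^*$. A pomset automaton is $A=\langle Q,F,\delta,\gamma\rangle$ with $F\subseteq Q$, $\delta:Q\times\Sigma\to2^Q$, $\gamma:Q\times\mathbb{M}(Q)\to2^Q$ ($\mathbb{M}(Q)$ finite multisets over $Q$), each $q$ having finitely many $\phi$ with $\gamma(q,\phi)\ne\emptyset$; it is finite if $Q$ is finite. The run relation $\to_A$ is the smallest relation with: $q\xrightarrow{1}_A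 q$; $q\xrightarrow{a}_A q'$ if $q'\in\delta(q,a)$; $q\xrightarrow{U\cdot V}_A q'$ if $q\xrightarrow{U}_A q''\xrightarrow{V}_A q'$; $q\xrightarrow{U_1\parallel\cdots\parallel U_n}_A q'$ if $q'\in\gamma(q,\{\!|q_1,\dots,q_n|\!\})$ and each $q_i\xrightarrow{U_i}_A q_i'$ for some $q_i'\in F$. $L_A(q)=\{U\mid\exists q'\in F.\ q\xrightarrow{U}_A q'\}$. The support relation $\preceq_A$ is the smallest preorder with $q'\preceq_A q$ whenever $q'\in\delta(q,a)$, or $q'\in\gamma(q,\phi)$, or $q'\in\phi$ with $\gamma(q,\phi)\ne\emptyset$; $A$ is fork-acyclic if $r\in\phi$ and $\gamma(q,\phi)\ne\emptyset$ imply $q\not\preceq_A r$. *)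

theory Defs
  imports Main "HOL-Library.Multiset"
begin

text \<open>A concrete labelled poset: carrier (a set of naturals), a partial order on it,
  and a labelling. Only the values of the labelling on the carrier matter.\<close>
type_synonym 'a lpo = "nat set \<times> (nat \<times> nat) set \<times> (nat \<Rightarrow> 'a)"

definition wf_lpo :: "'a lpo \<Rightarrow> bool" where
  "wf_lpo X = (case X of (C, R, l) \<Rightarrow> finite C \<and> R \<subseteq> C \<times> C \<and> partial_order_on C R)"

definition lpo_iso :: "'a lpo \<Rightarrow> 'a lpo \<Rightarrow> bool" where
  "lpo_iso X Y = (case X of (C, R, l) \<Rightarrow> case Y of (D, S, m) \<Rightarrow>
     (\<exists>f. bij_betw f C D \<and> (\<forall>x\<in>C. \<forall>y\<in>C. (x, y) \<in> R \<longleftrightarrow> (f x, f y) \<in> S)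
          \<and> (\<forall>x\<in>C. m (f x) = l x)))"

type_synonym 'a pomset = "'a lpo set"

definition cls :: "'a lpo \<Rightarrow> 'a pomset" where
  "cls X = {Y. wf_lpo Y \<and> lpo_iso X Y}"

definition is_pomset :: "'a pomset \<Rightarrow> bool" where
  "is_pomset U = (\<exists>X. wf_lpo X \<and> U = cls X)"

definition rep :: "'a pomset \<Rightarrow> 'a lpo" where
  "rep U = (SOME X. X \<in> U)"

definition one_lpo :: "'a lpo" where
  "one_lpo = ({}, {}, \<lambda>_. undefined)"

definition atom_lpo :: "'a \<Rightarrow> 'a lpo" where
  "atom_lpo a = ({0}, {(0, 0)}, \<lambda>_. a)"

text \<open>Disjoint union: left copy on even numbers, right copy on odd numbers.\<close>
definition seq_lpo :: "'a lpo \<Rightarrow> 'a lpo \<Rightarrow> 'a lpo" where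
  "seq_lpo X Y = (case X of (C, R, l) \<Rightarrow> case Y of (D, S, m) \<Rightarrow>
     ((\<lambda>x. 2 * x) ` C \<union> (\<lambda>x. 2 * x + 1) ` D,
      {(2 * x, 2 * y) | x y. (x, y) \<in> R} \<union> {(2 * x + 1, 2 * y + 1) | x y. (x, y) \<in> S}
        \<union> {(2 * x, 2 * y + 1) | x y. x \<in> C \<and> y \<in> D},
      \<lambda>z. if even z then l (z div 2) else m (z div 2)))"

definition par_lpo :: "'a lpo \<Rightarrow> 'a lpo \<Rightarrow> 'a lpo" where
  "par_lpo X Y = (case X of (C, R, l) \<Rightarrow> case Y of (D, S, m) \<Rightarrow>
     ((\<lambda>x. 2 * x) ` C \<union> (\<lambda>x. 2 * x + 1) ` D,
      {(2 * x, 2 * y) | x y. (x, y) \<in> R} \<union> {(2 * x + 1, 2 * y + 1) | x y. (x, y) \<in> S},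
      \<lambda>z. if even z then l (z div 2) else m (z div 2)))"

definition pone :: "'a pomset" where
  "pone = cls one_lpo"

definition patom :: "'a \<Rightarrow> 'a pomset" where
  "patom a = cls (atom_lpo a)"

definition pseq :: "'a pomset \<Rightarrow> 'a pomset \<Rightarrow> 'a pomset" where
  "pseq U V = cls (seq_lpo (rep U) (rep V))"

definition ppar :: "'a pomset \<Rightarrow> 'a pomset \<Rightarrow> 'a pomset" where
  "ppar U V = cls (par_lpo (rep U) (rep V))"

fun ppar_list :: "'a pomset list \<Rightarrow> 'a pomset" where
  "ppar_list [] = pone"
| "ppar_list (U # Us) = ppar U (ppar_list Us)"

definition lseq :: "'a pomset set \<Rightarrow> 'a pomset set \<Rightarrow> 'a pomset set" where
  "lseq L M = {pseq U V | U V. U \<in> L \<and> V \<in> M}"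

definition lpar :: "'a pomset set \<Rightarrow> 'a pomset set \<Rightarrow> 'a pomset set" where
  "lpar L M = {ppar U V | U V. U \<in> L \<and> V \<in> M}"

fun lpow :: "'a pomset set \<Rightarrow> nat \<Rightarrow> 'a pomset set" where
  "lpow L 0 = {pone}"
| "lpow L (Suc n) = lseq L (lpow L n)"

definition lstar :: "'a pomset set \<Rightarrow> 'a pomset set" where
  "lstar L = (\<Union>n. lpow L n)"

datatype 'a srexp = Zero | One | Sym 'a | Plus "'a srexp" "'a srexp"
  | Seq "'a srexp" "'a srexp" | Par "'a srexp" "'a srexp" | Star "'a srexp"

fun sem :: "'a srexp \<Rightarrow> 'a pomset set" where
  "sem Zero = {}"
| "sem One = {pone}"
| "sem (Sym a) = {patom a}"
| "sem (Plus e f) = sem e \<union> sem f"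
| "sem (Seq e f) = lseq (sem e) (sem f)"
| "sem (Par e f) = lpar (sem e) (sem f)"
| "sem (Star e) = lstar (sem e)"

text \<open>The state set Q is the whole type 'q; F is the set of accepting states,
  d the sequential transition function and g the fork transition function.\<close>
definition pomset_automaton :: "('q \<Rightarrow> 'q multiset \<Rightarrow> 'q set) \<Rightarrow> bool" where
  "pomset_automaton g = (\<forall>q. finite {\<phi>. g q \<phi> \<noteq> {}})"

inductive run :: "'q set \<Rightarrow> ('q \<Rightarrow> 'a \<Rightarrow> 'q set) \<Rightarrow> ('q \<Rightarrow> 'q multiset \<Rightarrow> 'q set)
    \<Rightarrow> 'q \<Rightarrow> 'a pomset \<Rightarrow> 'q \<Rightarrow> bool"
  for F d g where
  run_one: "run F d g q pone q"
| run_atom: "q' \<in> d q a \<Longrightarrow> run F d g q (patom a) q'"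
| run_seq: "run F d g q U q'' \<Longrightarrow> run F d g q'' V q' \<Longrightarrow> run F d g q (pseq U V) q'"
| run_par: "q' \<in> g q (mset qs) \<Longrightarrow> length Us = length qs \<Longrightarrow>
    (\<forall>i < length qs. \<exists>qf \<in> F. run F d g (qs ! i) (Us ! i) qf) \<Longrightarrow>
    run F d g q (ppar_list Us) q'"

definition lang :: "'q set \<Rightarrow> ('q \<Rightarrow> 'a \<Rightarrow> 'q set) \<Rightarrow> ('q \<Rightarrow> 'q multiset \<Rightarrow> 'q set)
    \<Rightarrow> 'q \<Rightarrow> 'a pomset set" where
  "lang F d g q = {U. \<exists>q' \<in> F. run F d g q U q'}"

text \<open>One-step support: a pair (q', q) means q' is directly below q.
  The support preorder is its reflexive-transitive closure.\<close>
definition supp_step :: "('q \<Rightarrow> 'a \<Rightarrow> 'q set) \<Rightarrow> ('q \<Rightarrow> 'q multiset \<Rightarrow> 'q set) \<Rightarrow> ('q \<times> 'q) set" where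
  "supp_step d g = {(q', q). (\<exists>a. q' \<in> d q a) \<or> (\<exists>\<phi>. q' \<in> g q \<phi>)
                             \<or> (\<exists>\<phi>. q' \<in># \<phi> \<and> g q \<phi> \<noteq> {})}"

definition supports :: "('q \<Rightarrow> 'a \<Rightarrow> 'q set) \<Rightarrow> ('q \<Rightarrow> 'q multiset \<Rightarrow> 'q set) \<Rightarrow> 'q \<Rightarrow> 'q \<Rightarrow> bool" where
  "supports d g q' q = ((q', q) \<in> (supp_step d g)\<^sup>*)"

definition fork_acyclic :: "('q \<Rightarrow> 'a \<Rightarrow> 'q set) \<Rightarrow> ('q \<Rightarrow> 'q multiset \<Rightarrow> 'q set) \<Rightarrow> bool" where
  "fork_acyclic d g = (\<forall>q \<phi> r. r \<in># \<phi> \<and> g q \<phi> \<noteq> {} \<longrightarrow> \<not> supports d g q r)"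

end

theory Submission
  imports Defs
begin

lemma iso_refl: "lpo_iso X X"
  unfolding lpo_iso_def by (cases X) (auto intro!: exI[of _ id])

lemma iso_sym: assumes "lpo_iso X Y" shows "lpo_iso Y X"
proof -
  obtain C R l where X: "X = (C,R,l)" by (cases X) auto
  obtain D S m where Y: "Y = (D,S,m)" by (cases Y) auto
  from assms obtain f where f: "bij_betw f C D" "\<forall>x\<in>C. \<forall>y\<in>C. (x, y) \<in> R \<longleftrightarrow> (f x, f y) \<in> S"
     "\<forall>x\<in>C. m (f x) = l x" unfolding lpo_iso_def X Y by auto
  let ?g = "inv_into C f"
  have g: "bij_betw ?g D C" using f(1) by (rule bij_betw_inv_into)
  have fg: "\<And>x. x \<in> D \<Longrightarrow> f (?g x) = x" using f(1) by (meson bij_betw_inv_into_right)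
  have gC: "\<And>x. x \<in> D \<Longrightarrow> ?g x \<in> C" using g by (meson bij_betwE)
  show ?thesis unfolding lpo_iso_def X Y
    apply simp apply (rule exI[of _ ?g]) using g f fg gC by metis
qed

lemma iso_trans: assumes "lpo_iso X Y" "lpo_iso Y Z" shows "lpo_iso X Z"
proof -
  obtain C R l where X: "X = (C,R,l)" by (cases X) auto
  obtain D S m where Y: "Y = (D,S,m)" by (cases Y) auto
  obtain E T n where Z: "Z = (E,T,n)" by (cases Z) auto
  from assms(1) obtain f where f: "bij_betw f C D" "\<forall>x\<in>C. \<forall>y\<in>C. (x, y) \<in> R \<longleftrightarrow> (f x, f y) \<in> S"
     "\<forall>x\<in>C. m (f x) = l x" unfolding lpo_iso_def X Y by auto
  from assms(2) obtain h where h: "bij_betw h D E" "\<forall>x\<in>D. \<forall>y\<in>D. (x, y) \<in> S \<longleftrightarrow> (h x, h y) \<in> T"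
     "\<forall>x\<in>D. n (h x) = m x" unfolding lpo_iso_def Z Y by auto
  have fD: "\<And>x. x \<in> C \<Longrightarrow> f x \<in> D" using f(1) by (meson bij_betwE)
  show ?thesis unfolding lpo_iso_def X Z
    apply simp apply (rule exI[of _ "h \<circ> f"]) using bij_betw_trans[OF f(1) h(1)] f h fD by simp
qed

lemma cls_eq: "lpo_iso X Y \<Longrightarrow> cls X = cls Y"
  unfolding cls_def using iso_sym iso_trans by blast

lemma cls_mem: "wf_lpo X \<Longrightarrow> X \<in> cls X"
  unfolding cls_def using iso_refl by blast

lemma rep_cls: assumes "wf_lpo X" shows "wf_lpo (rep (cls X))" "lpo_iso X (rep (cls X))"
proof -
  have "rep (cls X) \<in> cls X" unfolding rep_def using cls_mem[OF assms] by (rule someI)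
  then show "wf_lpo (rep (cls X))" "lpo_iso X (rep (cls X))" unfolding cls_def by auto
qed

lemma wf_seq: assumes "wf_lpo X" "wf_lpo Y" shows "wf_lpo (seq_lpo X Y)"
proof -
  obtain C R l where X: "X = (C,R,l)" by (cases X) auto
  obtain D S m where Y: "Y = (D,S,m)" by (cases Y) auto
  from assms have a: "finite C" "R \<subseteq> C \<times> C" "refl_on C R" "trans R" "antisym R"
     "finite D" "S \<subseteq> D \<times> D" "refl_on D S" "trans S" "antisym S"
    unfolding X Y wf_lpo_def partial_order_on_def preorder_on_def by auto
  define C' where "C' = (\<lambda>x. 2 * x) ` C \<union> (\<lambda>x. 2 * x + 1) ` D"
  define R' where "R' = {(2 * x, 2 * y) | x y. (x, y) \<in> R} \<union> {(2 * x + 1, 2 * y + 1) | x y. (x, y) \<in> S}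
        \<union> {(2 * x, 2 * y + 1) | x y. x \<in> C \<and> y \<in> D}"
  have 1: "finite C'" using a unfolding C'_def by auto
  have 2: "R' \<subseteq> C' \<times> C'" using a unfolding C'_def R'_def by auto
  have 3: "refl_on C' R'" using a unfolding C'_def R'_def refl_on_def by auto
  have 4: "trans R'"
  proof (rule transI)
    fix x y z assume "(x,y) \<in> R'" "(y,z) \<in> R'"
    have e: "\<And>a b::nat. 2*a \<noteq> Suc (2*b)" "\<And>a b::nat. Suc (2*b) \<noteq> 2*a" by presburger+
    from \<open>(x,y) \<in> R'\<close> \<open>(y,z) \<in> R'\<close> show "(x,z) \<in> R'" unfolding R'_def
      apply (elim UnE CollectE exE conjE)
      using a(2,4,7,9) e unfolding trans_def by (simp_all; blast)+
  qed
  have 5: "antisym R'"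
  proof (rule antisymI)
    fix x y assume "(x,y) \<in> R'" "(y,x) \<in> R'"
    have e: "\<And>a b::nat. 2*a \<noteq> Suc (2*b)" "\<And>a b::nat. Suc (2*b) \<noteq> 2*a" by presburger+
    from \<open>(x,y) \<in> R'\<close> \<open>(y,x) \<in> R'\<close> show "x = y" unfolding R'_def
      apply (elim UnE CollectE exE conjE)
      using a(5,10) e unfolding antisym_def by (simp_all; blast)+
  qed
  show ?thesis using 1 2 3 4 5 unfolding X Y wf_lpo_def seq_lpo_def partial_order_on_def preorder_on_def
    C'_def R'_def by simp
qed

lemma wf_par: assumes "wf_lpo X" "wf_lpo Y" shows "wf_lpo (par_lpo X Y)"
proof -
  obtain C R l where X: "X = (C,R,l)" by (cases X) auto
  obtain D S m where Y: "Y = (D,S,m)" by (cases Y) auto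
  from assms have a: "finite C" "R \<subseteq> C \<times> C" "refl_on C R" "trans R" "antisym R"
     "finite D" "S \<subseteq> D \<times> D" "refl_on D S" "trans S" "antisym S"
    unfolding X Y wf_lpo_def partial_order_on_def preorder_on_def by auto
  define C' where "C' = (\<lambda>x. 2 * x) ` C \<union> (\<lambda>x. 2 * x + 1) ` D"
  define R' where "R' = {(2 * x, 2 * y) | x y. (x, y) \<in> R} \<union> {(2 * x + 1, 2 * y + 1) | x y. (x, y) \<in> S}"
  have 1: "finite C'" using a unfolding C'_def by auto
  have 2: "R' \<subseteq> C' \<times> C'" using a unfolding C'_def R'_def by auto
  have 3: "refl_on C' R'" using a unfolding C'_def R'_def refl_on_def by auto
  have 4: "trans R'"
  proof (rule transI)
    fix x y z assume "(x,y) \<in> R'" "(y,z) \<in> R'"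
    have e: "\<And>a b::nat. 2*a \<noteq> Suc (2*b)" "\<And>a b::nat. Suc (2*b) \<noteq> 2*a" by presburger+
    from \<open>(x,y) \<in> R'\<close> \<open>(y,z) \<in> R'\<close> show "(x,z) \<in> R'" unfolding R'_def
      apply (elim UnE CollectE exE conjE)
      using a(2,4,7,9) e unfolding trans_def by (simp_all; blast)+
  qed
  have 5: "antisym R'"
  proof (rule antisymI)
    fix x y assume "(x,y) \<in> R'" "(y,x) \<in> R'"
    have e: "\<And>a b::nat. 2*a \<noteq> Suc (2*b)" "\<And>a b::nat. Suc (2*b) \<noteq> 2*a" by presburger+
    from \<open>(x,y) \<in> R'\<close> \<open>(y,x) \<in> R'\<close> show "x = y" unfolding R'_def
      apply (elim UnE CollectE exE conjE)
      using a(5,10) e unfolding antisym_def by (simp_all; blast)+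
  qed
  show ?thesis using 1 2 3 4 5 unfolding X Y wf_lpo_def par_lpo_def partial_order_on_def preorder_on_def
    C'_def R'_def by simp
qed


lemma iso_wit:
  assumes "\<forall>x\<in>C. f x \<in> D \<and> f' (f x) = x" "\<forall>y\<in>D. f' y \<in> C \<and> f (f' y) = y"
    "\<forall>x\<in>C. \<forall>y\<in>C. (x, y) \<in> R \<longleftrightarrow> (f x, f y) \<in> S" "\<forall>x\<in>C. m (f x) = l x"
  shows "lpo_iso (C,R,l) (D,S,m)"
proof -
  have "bij_betw f C D" by (rule bij_betw_byWitness[where f'=f']) (use assms in auto)
  then show ?thesis using assms unfolding lpo_iso_def by auto
qed

lemma iso_get:
  assumes "lpo_iso (C,R,l) (D,S,m)"
  obtains f f' where "\<forall>x\<in>C. f x \<in> D \<and> f' (f x) = x" "\<forall>y\<in>D. f' y \<in> C \<and> f (f' y) = y"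
    "\<forall>x\<in>C. \<forall>y\<in>C. (x, y) \<in> R \<longleftrightarrow> (f x, f y) \<in> S" "\<forall>x\<in>C. m (f x) = l x"
proof -
  from assms obtain f where f: "bij_betw f C D" "\<forall>x\<in>C. \<forall>y\<in>C. (x, y) \<in> R \<longleftrightarrow> (f x, f y) \<in> S"
     "\<forall>x\<in>C. m (f x) = l x" unfolding lpo_iso_def by auto
  show ?thesis
    apply (rule that[of f "inv_into C f"])
    using f bij_betw_inv_into_left[OF f(1)] bij_betw_inv_into_right[OF f(1)]
      bij_betwE[OF f(1)] bij_betwE[OF bij_betw_inv_into[OF f(1)]] by auto
qed

lemma mem_img_even: "(z::nat) \<in> (\<lambda>x. 2 * x) ` C \<longleftrightarrow> even z \<and> z div 2 \<in> C"
proof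
  assume "even z \<and> z div 2 \<in> C"
  then have "z = 2 * (z div 2)" "z div 2 \<in> C" by auto
  then show "z \<in> (\<lambda>x. 2 * x) ` C" by (rule image_eqI)
qed auto

lemma mem_img_odd: "(z::nat) \<in> (\<lambda>x. 2 * x + 1) ` C \<longleftrightarrow> odd z \<and> z div 2 \<in> C"
proof
  assume "odd z \<and> z div 2 \<in> C"
  then have "z = 2 * (z div 2) + 1" "z div 2 \<in> C" by auto
  then show "z \<in> (\<lambda>x. 2 * x + 1) ` C" by (rule image_eqI)
qed auto

lemma mem_rel_ee: "((z::nat), (w::nat)) \<in> {(2 * x, 2 * y) | x y. (x, y) \<in> R} \<longleftrightarrow> even z \<and> even w \<and> (z div 2, w div 2) \<in> R"
proof
  assume "even z \<and> even w \<and> (z div 2, w div 2) \<in> R"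
  then have "z = 2 * (z div 2)" "w = 2 * (w div 2)" "(z div 2, w div 2) \<in> R" by auto
  then show "(z, w) \<in> {(2 * x, 2 * y) | x y. (x, y) \<in> R}" by blast
qed auto

lemma mem_rel_oo: "((z::nat), (w::nat)) \<in> {(2 * x + 1, 2 * y + 1) | x y. (x, y) \<in> R} \<longleftrightarrow> odd z \<and> odd w \<and> (z div 2, w div 2) \<in> R"
proof
  assume "odd z \<and> odd w \<and> (z div 2, w div 2) \<in> R"
  then have "z = 2 * (z div 2) + 1" "w = 2 * (w div 2) + 1" "(z div 2, w div 2) \<in> R" by auto
  then show "(z, w) \<in> {(2 * x + 1, 2 * y + 1) | x y. (x, y) \<in> R}" by blast
qed auto

lemma mem_rel_eo: "((z::nat), (w::nat)) \<in> {(2 * x, 2 * y + 1) | x y. x \<in> C \<and> y \<in> D} \<longleftrightarrow> even z \<and> odd w \<and> z div 2 \<in> C \<and> w div 2 \<in> D"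
proof
  assume "even z \<and> odd w \<and> z div 2 \<in> C \<and> w div 2 \<in> D"
  then have "z = 2 * (z div 2)" "w = 2 * (w div 2) + 1" "z div 2 \<in> C" "w div 2 \<in> D" by auto
  then show "(z, w) \<in> {(2 * x, 2 * y + 1) | x y. x \<in> C \<and> y \<in> D}" by blast
qed auto

lemma seq_alt: "seq_lpo (C,R,l) (D,S,m) =
  ({z. if even z then z div 2 \<in> C else z div 2 \<in> D},
   {(z,w). (even z \<and> even w \<and> (z div 2, w div 2) \<in> R) \<or> (odd z \<and> odd w \<and> (z div 2, w div 2) \<in> S)
       \<or> (even z \<and> odd w \<and> z div 2 \<in> C \<and> w div 2 \<in> D)},
   \<lambda>z. if even z then l (z div 2) else m (z div 2))"
proof -
  have 1: "(\<lambda>x. 2 * x) ` C \<union> (\<lambda>x. 2 * x + 1) ` D = {z. if even z then z div 2 \<in> C else z div 2 \<in> D}"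
    by (rule set_eqI) (simp only: Un_iff mem_img_even mem_img_odd mem_Collect_eq split: if_split, blast)
  have 2: "{(2 * x, 2 * y) | x y. (x, y) \<in> R} \<union> {(2 * x + 1, 2 * y + 1) | x y. (x, y) \<in> S}
        \<union> {(2 * x, 2 * y + 1) | x y. x \<in> C \<and> y \<in> D} = {(z,w). (even z \<and> even w \<and> (z div 2, w div 2) \<in> R) \<or> (odd z \<and> odd w \<and> (z div 2, w div 2) \<in> S)
       \<or> (even z \<and> odd w \<and> z div 2 \<in> C \<and> w div 2 \<in> D)}"
    apply (rule set_eqI) subgoal for p by (cases p) (simp only: Un_iff mem_rel_ee mem_rel_oo mem_rel_eo, simp)
    done
  show ?thesis unfolding seq_lpo_def using 1 2 by simp
qed

lemma seq_cong: assumes "lpo_iso X X'" "lpo_iso Y Y'" shows "lpo_iso (seq_lpo X Y) (seq_lpo X' Y')"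
proof -
  obtain C R l where X: "X = (C,R,l)" by (cases X) auto
  obtain D S m where Y: "Y = (D,S,m)" by (cases Y) auto
  obtain C' R' l' where X': "X' = (C',R',l')" by (cases X') auto
  obtain D' S' m' where Y': "Y' = (D',S',m')" by (cases Y') auto
  obtain f f' where f: "\<forall>x\<in>C. f x \<in> C' \<and> f' (f x) = x" "\<forall>y\<in>C'. f' y \<in> C \<and> f (f' y) = y"
    "\<forall>x\<in>C. \<forall>y\<in>C. (x, y) \<in> R \<longleftrightarrow> (f x, f y) \<in> R'" "\<forall>x\<in>C. l' (f x) = l x"
    using assms(1) unfolding X X' by (rule iso_get)
  obtain g g' where g: "\<forall>x\<in>D. g x \<in> D' \<and> g' (g x) = x" "\<forall>y\<in>D'. g' y \<in> D \<and> g (g' y) = y"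
    "\<forall>x\<in>D. \<forall>y\<in>D. (x, y) \<in> S \<longleftrightarrow> (g x, g y) \<in> S'" "\<forall>x\<in>D. m' (g x) = m x"
    using assms(2) unfolding Y Y' by (rule iso_get)
  let ?h = "\<lambda>z::nat. if even z then 2 * f (z div 2) else 2 * g (z div 2) + 1"
  let ?h' = "\<lambda>z::nat. if even z then 2 * f' (z div 2) else 2 * g' (z div 2) + 1"
  show ?thesis unfolding X Y X' Y' seq_alt
    apply (rule iso_wit[where f="?h" and f'="?h'"])
    using f g by auto
qed

lemma odd_pred_div: "odd (n::nat) \<Longrightarrow> (n - Suc 0) div 2 = n div 2"
  by presburger

lemma seq_assoc_iso: "lpo_iso (seq_lpo (seq_lpo X Y) Z) (seq_lpo X (seq_lpo Y Z))"
proof -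
  obtain C R l where X: "X = (C,R,l)" by (cases X) auto
  obtain D S m where Y: "Y = (D,S,m)" by (cases Y) auto
  obtain E T n where Z: "Z = (E,T,n)" by (cases Z) auto
  let ?f = "\<lambda>z::nat. if even z \<and> even (z div 2) then 2*(z div 2 div 2) else if even z then 2*(2*(z div 2 div 2))+1 else 2*(2*(z div 2)+1)+1"
  let ?f' = "\<lambda>w::nat. if even w then 2*(2*(w div 2)) else if even (w div 2) then 2*(2*(w div 2 div 2)+1) else 2*(w div 2 div 2)+1"
  show ?thesis unfolding X Y Z seq_alt
    apply (rule iso_wit[where f="?f" and f'="?f'"])
    by (auto simp: even_two_times_div_two odd_two_times_div_two_succ odd_pred_div)
qed

lemma seq_one_iso: "lpo_iso (seq_lpo one_lpo X) X"
proof -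
  obtain C R l where X: "X = (C,R,l)" by (cases X) auto
  show ?thesis unfolding X one_lpo_def seq_alt
    apply (rule iso_wit[where f="\<lambda>z. z div 2" and f'="\<lambda>z. 2*z+1"])
    by (auto simp: odd_two_times_div_two_succ)
qed

lemma seq_one_iso2: "lpo_iso (seq_lpo X one_lpo) X"
proof -
  obtain C R l where X: "X = (C,R,l)" by (cases X) auto
  show ?thesis unfolding X one_lpo_def seq_alt
    apply (rule iso_wit[where f="\<lambda>z. z div 2" and f'="\<lambda>z. 2*z"])
    by (auto simp: even_two_times_div_two)
qed


lemma pom_cls: "wf_lpo X \<Longrightarrow> is_pomset (cls X)"
  unfolding is_pomset_def by blast

lemma pseq_cls: assumes "wf_lpo X" "wf_lpo Y" shows "pseq (cls X) (cls Y) = cls (seq_lpo X Y)"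
  unfolding pseq_def
  by (rule cls_eq, rule seq_cong) (use rep_cls(2)[OF assms(1)] rep_cls(2)[OF assms(2)] iso_sym in blast)+

lemma wf_one: "wf_lpo one_lpo"
  unfolding wf_lpo_def one_lpo_def by simp

lemma wf_atom: "wf_lpo (atom_lpo a)"
  unfolding wf_lpo_def atom_lpo_def partial_order_on_def preorder_on_def refl_on_def trans_def antisym_def by simp

lemma pom_pone: "is_pomset pone" unfolding pone_def by (rule pom_cls[OF wf_one])
lemma pom_patom: "is_pomset (patom a)" unfolding patom_def by (rule pom_cls[OF wf_atom])

lemma pom_pseq: assumes "is_pomset U" "is_pomset V" shows "is_pomset (pseq U V)"
proof -
  obtain X Y where "wf_lpo X" "wf_lpo Y" "U = cls X" "V = cls Y" using assms unfolding is_pomset_def by blast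
  then show ?thesis using pseq_cls[of X Y] pom_cls[OF wf_seq[of X Y]] by simp
qed

lemma pom_ppar: assumes "is_pomset U" "is_pomset V" shows "is_pomset (ppar U V)"
proof -
  obtain X Y where "wf_lpo X" "wf_lpo Y" "U = cls X" "V = cls Y" using assms unfolding is_pomset_def by blast
  then show ?thesis unfolding ppar_def using rep_cls(1)[of X] rep_cls(1)[of Y] pom_cls[OF wf_par] by simp
qed

lemma pom_ppar_list: "\<forall>U\<in>set Us. is_pomset U \<Longrightarrow> is_pomset (ppar_list Us)"
  by (induction Us) (auto simp: pom_pone pom_ppar)

lemma pseq_assoc: assumes "is_pomset U" "is_pomset V" "is_pomset W"
  shows "pseq (pseq U V) W = pseq U (pseq V W)"
proof -
  obtain X Y Z where w: "wf_lpo X" "wf_lpo Y" "wf_lpo Z" and e: "U = cls X" "V = cls Y" "W = cls Z"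
    using assms unfolding is_pomset_def by blast
  show ?thesis unfolding e using w
    by (simp add: pseq_cls wf_seq cls_eq[OF seq_assoc_iso])
qed

lemma pseq_one_l: assumes "is_pomset U" shows "pseq pone U = U"
proof -
  obtain X where w: "wf_lpo X" and e: "U = cls X" using assms unfolding is_pomset_def by blast
  show ?thesis unfolding e pone_def using pseq_cls[OF wf_one w] cls_eq[OF seq_one_iso[of X]] by simp
qed

lemma pseq_one_r: assumes "is_pomset U" shows "pseq U pone = U"
proof -
  obtain X where w: "wf_lpo X" and e: "U = cls X" using assms unfolding is_pomset_def by blast
  show ?thesis unfolding e pone_def using pseq_cls[OF w wf_one] cls_eq[OF seq_one_iso2[of X]] by simp
qed

definition flat :: "'a pomset list \<Rightarrow> 'a pomset" where
  "flat Us = foldr pseq Us pone"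

definition concL :: "'b list set \<Rightarrow> 'b list set \<Rightarrow> 'b list set" where
  "concL A B = {u @ v | u v. u \<in> A \<and> v \<in> B}"

fun powL :: "'b list set \<Rightarrow> nat \<Rightarrow> 'b list set" where
  "powL A 0 = {[]}"
| "powL A (Suc n) = concL A (powL A n)"

definition starL :: "'b list set \<Rightarrow> 'b list set" where
  "starL A = (\<Union>n. powL A n)"

abbreviation "PL \<equiv> lists (Collect is_pomset)"

lemma flat_simps[simp]: "flat [] = pone" "flat (U # Us) = pseq U (flat Us)"
  unfolding flat_def by auto

lemma pom_flat: "Us \<in> PL \<Longrightarrow> is_pomset (flat Us)"
  by (induction Us) (auto simp: pom_pone pom_pseq)

lemma flat_append: "u \<in> PL \<Longrightarrow> v \<in> PL \<Longrightarrow> flat (u @ v) = pseq (flat u) (flat v)"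
  by (induction u) (auto simp: pseq_one_l pom_flat pseq_assoc)

lemma flat_single: "is_pomset U \<Longrightarrow> flat [U] = U"
  by (simp add: pseq_one_r)

lemma flat_conc: assumes "A \<subseteq> PL" "B \<subseteq> PL" shows "flat ` concL A B = lseq (flat ` A) (flat ` B)"
proof -
  have *: "\<forall>u\<in>A. \<forall>v\<in>B. flat (u@v) = pseq (flat u) (flat v)" by (intro ballI flat_append) (meson assms subsetD)+
  show ?thesis
  proof
    show "flat ` concL A B \<subseteq> lseq (flat ` A) (flat ` B)"
    proof
      fix x assume "x \<in> flat ` concL A B"
      then obtain u v where "x = flat (u @ v)" "u \<in> A" "v \<in> B" unfolding concL_def by blast
      then have "x = pseq (flat u) (flat v)" using * by simp
      then show "x \<in> lseq (flat ` A) (flat ` B)" unfolding lseq_def using \<open>u \<in> A\<close> \<open>v \<in> B\<close> by blast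
    qed
    show "lseq (flat ` A) (flat ` B) \<subseteq> flat ` concL A B"
    proof
      fix x assume "x \<in> lseq (flat ` A) (flat ` B)"
      then obtain u v where "x = pseq (flat u) (flat v)" "u \<in> A" "v \<in> B" unfolding lseq_def by blast
      then have "x = flat (u @ v)" using * by simp
      moreover have "u @ v \<in> concL A B" unfolding concL_def using \<open>u \<in> A\<close> \<open>v \<in> B\<close> by blast
      ultimately show "x \<in> flat ` concL A B" by blast
    qed
  qed
qed

lemma conc_PL: assumes "A \<subseteq> PL" "B \<subseteq> PL" shows "concL A B \<subseteq> PL"
proof
  fix x assume "x \<in> concL A B"
  then obtain u v where "x = u @ v" "u \<in> A" "v \<in> B" unfolding concL_def by blast
  then have "u \<in> PL" "v \<in> PL" using assms by (meson subsetD)+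
  then show "x \<in> PL" using \<open>x = u @ v\<close> by simp
qed

lemma pow_PL: "A \<subseteq> PL \<Longrightarrow> powL A n \<subseteq> PL"
  by (induction n) (auto simp: conc_PL)

lemma star_PL: "A \<subseteq> PL \<Longrightarrow> starL A \<subseteq> PL"
  unfolding starL_def using pow_PL by blast

lemma flat_pow: "A \<subseteq> PL \<Longrightarrow> flat ` powL A n = lpow (flat ` A) n"
  by (induction n) (auto simp: flat_conc pow_PL)

lemma flat_star: assumes "A \<subseteq> PL" shows "flat ` starL A = lstar (flat ` A)"
  unfolding starL_def lstar_def by (simp add: image_UN flat_pow[OF assms])

lemma lseq_pom: assumes "L \<subseteq> Collect is_pomset" "M \<subseteq> Collect is_pomset" shows "lseq L M \<subseteq> Collect is_pomset"
proof
  fix x assume "x \<in> lseq L M"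
  then obtain U V where "x = pseq U V" "U \<in> L" "V \<in> M" unfolding lseq_def by blast
  then show "x \<in> Collect is_pomset" using assms pom_pseq by blast
qed

lemma lpar_pom: assumes "L \<subseteq> Collect is_pomset" "M \<subseteq> Collect is_pomset" shows "lpar L M \<subseteq> Collect is_pomset"
proof
  fix x assume "x \<in> lpar L M"
  then obtain U V where "x = ppar U V" "U \<in> L" "V \<in> M" unfolding lpar_def by blast
  then show "x \<in> Collect is_pomset" using assms pom_ppar by blast
qed

lemma lpow_pom: "L \<subseteq> Collect is_pomset \<Longrightarrow> lpow L n \<subseteq> Collect is_pomset"
  by (induction n) (simp_all add: pom_pone lseq_pom)

lemma sem_pom: "sem e \<subseteq> Collect is_pomset"
proof (induction e)
  case (Star e) then show ?case unfolding sem.simps lstar_def by (intro UN_least lpow_pom)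
qed (simp_all add: pom_pone pom_patom lseq_pom lpar_pom)

inductive reg :: "'a pomset list set \<Rightarrow> bool" where
  reg_atom: "reg ((\<lambda>U. [U]) ` sem e)"
| reg_eps: "reg {[]}"
| reg_un: "reg A \<Longrightarrow> reg B \<Longrightarrow> reg (A \<union> B)"
| reg_conc: "reg A \<Longrightarrow> reg B \<Longrightarrow> reg (concL A B)"
| reg_star: "reg A \<Longrightarrow> reg (starL A)"

lemma reg_expr: "reg L \<Longrightarrow> L \<subseteq> PL \<and> (\<exists>e. sem e = flat ` L)"
proof (induction rule: reg.induct)
  case (reg_atom e)
  have *: "\<forall>U\<in>sem e. flat [U] = U"
  proof
    fix U assume "U \<in> sem e"
    then have "is_pomset U" using sem_pom[of e] by blast
    then show "flat [U] = U" by (rule flat_single)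
  qed
  have "flat ` ((\<lambda>U. [U]) ` sem e) = (\<lambda>U. flat [U]) ` sem e" by (simp add: image_image)
  also have "... = (\<lambda>U. U) ` sem e" by (rule image_cong) (use * in auto)
  finally have "sem e = flat ` ((\<lambda>U. [U]) ` sem e)" by simp
  moreover have "(\<lambda>U. [U]) ` sem e \<subseteq> PL" using sem_pom[of e] by auto
  ultimately show ?case by blast
next
  case reg_eps
  have "sem One = flat ` {[]}" by simp
  moreover have "{[]} \<subseteq> PL" by simp
  ultimately show ?case by blast
next
  case (reg_un A B)
  then obtain e f where "sem e = flat ` A" "sem f = flat ` B" by meson
  then have "sem (Plus e f) = flat ` (A \<union> B)" by (simp add: image_Un)
  moreover have "A \<union> B \<subseteq> PL" using reg_un.IH by simp
  ultimately show ?case by blast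
next
  case (reg_conc A B)
  then obtain e f where "sem e = flat ` A" "sem f = flat ` B" by meson
  moreover have "A \<subseteq> PL" "B \<subseteq> PL" using reg_conc.IH by simp_all
  ultimately have "sem (Seq e f) = flat ` (concL A B)" by (simp add: flat_conc)
  moreover have "concL A B \<subseteq> PL" using reg_conc.IH by (intro conc_PL) simp_all
  ultimately show ?case by blast
next
  case (reg_star A)
  then obtain e where "sem e = flat ` A" by meson
  moreover have "A \<subseteq> PL" using reg_star.IH by simp
  ultimately have "sem (Star e) = flat ` (starL A)" by (simp add: flat_star)
  moreover have "starL A \<subseteq> PL" using reg_star.IH by (intro star_PL) simp
  ultimately show ?case by blast
qed

inductive walkin :: "('q \<Rightarrow> 'q \<Rightarrow> 'a pomset set) \<Rightarrow> 'q set \<Rightarrow> 'q \<Rightarrow> 'a pomset list \<Rightarrow> 'q \<Rightarrow> bool"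
  for S X where
  wi_nil: "walkin S X p [] p"
| wi_one: "U \<in> S p p' \<Longrightarrow> walkin S X p [U] p'"
| wi_cons: "U \<in> S p m \<Longrightarrow> m \<in> X \<Longrightarrow> walkin S X m Us p' \<Longrightarrow> walkin S X p (U # Us) p'"

lemma walkin_mono: "walkin S X p Us p' \<Longrightarrow> X \<subseteq> Y \<Longrightarrow> walkin S Y p Us p'"
  by (induction rule: walkin.induct) (auto intro: walkin.intros)

lemma walkin_app: "walkin S Y p u m \<Longrightarrow> m \<in> Y \<Longrightarrow> walkin S Y m v p' \<Longrightarrow> walkin S Y p (u @ v) p'"
  by (induction rule: walkin.induct) (auto intro: walkin.intros)

lemma starL_nil: "[] \<in> starL A"
  unfolding starL_def by (auto intro: exI[of _ 0])

lemma starL_cons: assumes "u \<in> A" "v \<in> starL A" shows "u @ v \<in> starL A"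
proof -
  obtain n where "v \<in> powL A n" using assms(2) unfolding starL_def by auto
  then have "u @ v \<in> powL A (Suc n)" using assms(1) by (auto simp: concL_def)
  then show ?thesis unfolding starL_def by blast
qed

lemma starL_induct: "w \<in> starL A \<Longrightarrow> P [] \<Longrightarrow> (\<And>u v. u \<in> A \<Longrightarrow> P v \<Longrightarrow> P (u @ v)) \<Longrightarrow> P w"
proof -
  assume "w \<in> starL A" "P []" and st: "\<And>u v. u \<in> A \<Longrightarrow> P v \<Longrightarrow> P (u @ v)"
  then obtain n where "w \<in> powL A n" unfolding starL_def by auto
  then show "P w" proof (induction n arbitrary: w)
    case 0 then show ?case using \<open>P []\<close> by simp
  next
    case (Suc n)
    obtain u v where "w = u @ v" "u \<in> A" "v \<in> powL A n" using Suc.prems by (auto simp: concL_def)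
    then show ?case using Suc.IH st by auto
  qed
qed

lemma walkin_star: "w \<in> starL {Us. walkin S Y k Us k} \<Longrightarrow> k \<in> Y \<Longrightarrow> walkin S Y k w k"
  by (erule starL_induct) (auto intro: walkin.intros walkin_app)

lemma concL_I: "u \<in> A \<Longrightarrow> v \<in> B \<Longrightarrow> u @ v \<in> concL A B"
  unfolding concL_def by blast

lemma concL_E: assumes "x \<in> concL A B" obtains u v where "x = u @ v" "u \<in> A" "v \<in> B"
  using assms unfolding concL_def by blast

lemma walkin_split:
  "walkin S (insert k X) p Us p' \<Longrightarrow>
    Us \<in> {Us. walkin S X p Us p'} \<union>
       concL {Us. walkin S X p Us k} (concL (starL {Us. walkin S X k Us k}) {Us. walkin S X k Us p'})"
proof (induction rule: walkin.induct)
  case (wi_nil p)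
  have "walkin S X p [] p" by (rule wi_nil)
  then show ?case by blast
next
  case (wi_one U p p')
  then have "walkin S X p [U] p'" by (rule walkin.wi_one)
  then show ?case by blast
next
  case (wi_cons U p m Us p')
  show ?case
  proof (cases "m = k")
    case True
    have "Us \<in> concL (starL {Us. walkin S X k Us k}) {Us. walkin S X k Us p'}"
      using wi_cons.IH unfolding True
    proof (elim UnE)
      assume "Us \<in> {Us. walkin S X k Us p'}"
      then have "[] @ Us \<in> concL (starL {Us. walkin S X k Us k}) {Us. walkin S X k Us p'}"
        by (rule concL_I[OF starL_nil])
      then show ?thesis by simp
    next
      assume "Us \<in> concL {Us. walkin S X k Us k} (concL (starL {Us. walkin S X k Us k}) {Us. walkin S X k Us p'})"
      then obtain u vw where 1: "Us = u @ vw" "u \<in> {Us. walkin S X k Us k}"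
         "vw \<in> concL (starL {Us. walkin S X k Us k}) {Us. walkin S X k Us p'}" by (rule concL_E)
      from 1(3) obtain v w where 2: "vw = v @ w" "v \<in> starL {Us. walkin S X k Us k}"
        "w \<in> {Us. walkin S X k Us p'}" by (rule concL_E)
      have "u @ v \<in> starL {Us. walkin S X k Us k}" by (rule starL_cons[OF 1(2) 2(2)])
      then have "(u @ v) @ w \<in> concL (starL {Us. walkin S X k Us k}) {Us. walkin S X k Us p'}"
        by (rule concL_I[OF _ 2(3)])
      moreover have "Us = u @ (v @ w)" using 1(1) 2(1) by simp
      ultimately show ?thesis by simp
    qed
    then have h1: "Us \<in> concL (starL {Us. walkin S X k Us k}) {Us. walkin S X k Us p'}" .
    have "walkin S X p [U] k" using wi_cons.hyps(1) True by (simp add: walkin.wi_one)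
    then have h2: "[U] \<in> {Us. walkin S X p Us k}" by (rule CollectI)
    have "[U] @ Us \<in> concL {Us. walkin S X p Us k} (concL (starL {Us. walkin S X k Us k}) {Us. walkin S X k Us p'})"
      by (rule concL_I[OF h2 h1])
    then show ?thesis by simp
  next
    case False
    then have mX: "m \<in> X" using wi_cons.hyps(2) by simp
    from wi_cons.IH show ?thesis
    proof (elim UnE)
      assume "Us \<in> {Us. walkin S X m Us p'}"
      then have "walkin S X p (U # Us) p'" using mX wi_cons.hyps(1) by (simp add: walkin.wi_cons)
      then show ?thesis by (intro UnI1 CollectI)
    next
      assume "Us \<in> concL {Us. walkin S X m Us k} (concL (starL {Us. walkin S X k Us k}) {Us. walkin S X k Us p'})"
      then obtain u v where uv0: "Us = u @ v" "u \<in> {Us. walkin S X m Us k}" "v \<in> concL (starL {Us. walkin S X k Us k}) {Us. walkin S X k Us p'}"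
        by (rule concL_E)
      then have uv: "Us = u @ v" "walkin S X m u k" "v \<in> concL (starL {Us. walkin S X k Us k}) {Us. walkin S X k Us p'}"
        by simp_all
      then have "walkin S X p (U # u) k" using mX wi_cons.hyps(1) by (simp add: walkin.wi_cons)
      then have "(U # u) @ v \<in> concL {Us. walkin S X p Us k} (concL (starL {Us. walkin S X k Us k}) {Us. walkin S X k Us p'})"
        using uv(3) by (intro concL_I CollectI)
      then show ?thesis using uv(1) by simp
    qed
  qed
qed

lemma starL_mono: assumes "\<And>x. x \<in> A \<Longrightarrow> x \<in> B" "w \<in> starL A" shows "w \<in> starL B"
  using assms(2)
proof (rule starL_induct)
  show "[] \<in> starL B" by (rule starL_nil)
next
  fix u v assume "u \<in> A" "v \<in> starL B"
  then show "u @ v \<in> starL B" using assms(1) starL_cons by blast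
qed

lemma walkin_insert:
  "{Us. walkin S (insert k X) p Us p'} = {Us. walkin S X p Us p'} \<union>
       concL {Us. walkin S X p Us k} (concL (starL {Us. walkin S X k Us k}) {Us. walkin S X k Us p'})"
proof
  show "{Us. walkin S (insert k X) p Us p'} \<subseteq> {Us. walkin S X p Us p'} \<union>
       concL {Us. walkin S X p Us k} (concL (starL {Us. walkin S X k Us k}) {Us. walkin S X k Us p'})"
    by (rule subsetI, drule CollectD, erule walkin_split)
next
  have m: "\<And>p Us p'. walkin S X p Us p' \<Longrightarrow> walkin S (insert k X) p Us p'"
    using walkin_mono by (metis subset_insertI)
  show "{Us. walkin S X p Us p'} \<union>
       concL {Us. walkin S X p Us k} (concL (starL {Us. walkin S X k Us k}) {Us. walkin S X k Us p'})
       \<subseteq> {Us. walkin S (insert k X) p Us p'}"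
  proof
    fix x assume "x \<in> {Us. walkin S X p Us p'} \<union>
       concL {Us. walkin S X p Us k} (concL (starL {Us. walkin S X k Us k}) {Us. walkin S X k Us p'})"
    then show "x \<in> {Us. walkin S (insert k X) p Us p'}"
    proof (elim UnE)
      assume "x \<in> {Us. walkin S X p Us p'}" then show ?thesis using m by simp
    next
      assume "x \<in> concL {Us. walkin S X p Us k} (concL (starL {Us. walkin S X k Us k}) {Us. walkin S X k Us p'})"
      then obtain u vw where 1: "x = u @ vw" "u \<in> {Us. walkin S X p Us k}"
         "vw \<in> concL (starL {Us. walkin S X k Us k}) {Us. walkin S X k Us p'}" by (rule concL_E)
      from 1(3) obtain v w where 2: "vw = v @ w" "v \<in> starL {Us. walkin S X k Us k}"
        "w \<in> {Us. walkin S X k Us p'}" by (rule concL_E)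
      have "v \<in> starL {Us. walkin S (insert k X) k Us k}"
        by (rule starL_mono[OF _ 2(2)]) (simp add: m)
      then have v: "walkin S (insert k X) k v k" by (rule walkin_star) simp
      have w: "walkin S (insert k X) k w p'" using 2(3) m by simp
      have u: "walkin S (insert k X) p u k" using 1(2) m by simp
      have "walkin S (insert k X) k (v @ w) p'" by (rule walkin_app[OF v _ w]) simp
      then have "walkin S (insert k X) p (u @ (v @ w)) p'" by (rule walkin_app[OF u, rotated]) simp
      then show ?thesis using 1(1) 2(1) by simp
    qed
  qed
qed

lemma walkin_empty:
  "{Us. walkin S {} p Us p'} = (if p = p' then {[]} else {}) \<union> (\<lambda>U. [U]) ` S p p'"
proof
  show "{Us. walkin S {} p Us p'} \<subseteq> (if p = p' then {[]} else {}) \<union> (\<lambda>U. [U]) ` S p p'"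
    by (auto elim: walkin.cases)
qed (auto intro: walkin.intros split: if_splits)

lemma kleene:
  assumes "finite X" "\<forall>p p'. \<exists>e. sem e = S p p'"
  shows "reg {Us. walkin S X p Us p'}"
  using assms(1)
proof (induction X arbitrary: p p' rule: finite_induct)
  case empty
  obtain e where "sem e = S p p'" using assms(2) by blast
  then have "reg ((\<lambda>U. [U]) ` S p p')" using reg_atom by metis
  moreover have "reg (if p = p' then {[]} else {})"
  proof -
    have "reg ((\<lambda>U. [U]) ` sem Zero)" by (rule reg_atom)
    then show ?thesis by (auto intro: reg_eps)
  qed
  ultimately show ?case unfolding walkin_empty by (rule reg_un[rotated])
next
  case (insert k X)
  show ?case unfolding walkin_insert by (intro reg_un reg_conc reg_star insert.IH)
qed

definition stepL :: "'q set \<Rightarrow> ('q \<Rightarrow> 'a \<Rightarrow> 'q set) \<Rightarrow> ('q \<Rightarrow> 'q multiset \<Rightarrow> 'q set) \<Rightarrow> 'q \<Rightarrow> 'q \<Rightarrow> 'a pomset set" where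
  "stepL F d g p p' = {patom a | a. p' \<in> d p a} \<union>
     {ppar_list Us | Us qs. p' \<in> g p (mset qs) \<and> length Us = length qs \<and>
        (\<forall>i<length qs. \<exists>qf\<in>F. run F d g (qs!i) (Us!i) qf)}"

lemma run_pom: "run F d g p U p' \<Longrightarrow> is_pomset U"
proof (induction rule: run.induct)
  case (run_one q) then show ?case by (rule pom_pone)
next
  case (run_atom q' q a) show ?case by (rule pom_patom)
next
  case (run_seq q U q'' V q') show ?case by (rule pom_pseq[OF run_seq.IH])
next
  case (run_par q' q qs Us)
  have "\<forall>U\<in>set Us. is_pomset U"
  proof
    fix U assume "U \<in> set Us"
    then obtain i where "i < length Us" "U = Us ! i" by (metis in_set_conv_nth)
    then show "is_pomset U" using run_par(2,3) by auto
  qed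
  then show ?case by (rule pom_ppar_list)
qed

lemma step_run: "U \<in> stepL F d g p p' \<Longrightarrow> run F d g p U p'"
  unfolding stepL_def by (auto intro: run.intros)

lemma step_pom: "U \<in> stepL F d g p p' \<Longrightarrow> is_pomset U"
  using step_run run_pom by metis

lemma walk_run: "walkin (stepL F d g) X p Us p' \<Longrightarrow> run F d g p (flat Us) p'"
proof (induction rule: walkin.induct)
  case (wi_nil p) then show ?case by (simp add: run_one)
next
  case (wi_one U p p')
  then have "run F d g p U p'" by (rule step_run)
  then have "run F d g p (pseq U pone) p'" by (rule run_seq) (rule run_one)
  then show ?case by simp
next
  case (wi_cons U p m Us p')
  then have "run F d g p U m" by (simp add: step_run)
  then have "run F d g p (pseq U (flat Us)) p'" using wi_cons.IH by (rule run_seq)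
  then show ?case by simp
qed

lemma walk_PL: "walkin S X p Us p' \<Longrightarrow> (\<And>p p' U. U \<in> S p p' \<Longrightarrow> is_pomset U) \<Longrightarrow> Us \<in> PL"
  by (induction rule: walkin.induct) auto

lemma run_walk: "run F d g p U p' \<Longrightarrow> \<exists>Us. walkin (stepL F d g) UNIV p Us p' \<and> U = flat Us"
proof (induction rule: run.induct)
  case (run_one q)
  have "walkin (stepL F d g) UNIV q [] q" by (rule wi_nil)
  then show ?case by (intro exI[of _ "[]"]) simp
next
  case (run_atom q' q a)
  then have "patom a \<in> stepL F d g q q'" unfolding stepL_def by blast
  then have "walkin (stepL F d g) UNIV q [patom a] q'" by (rule wi_one)
  moreover have "patom a = flat [patom a]" by (rule flat_single[symmetric, OF pom_patom])
  ultimately show ?case by (intro exI[of _ "[patom a]"] conjI)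
next
  case (run_seq q U q'' V q')
  then obtain u v where u: "walkin (stepL F d g) UNIV q u q''" "U = flat u"
    and v: "walkin (stepL F d g) UNIV q'' v q'" "V = flat v" by blast
  have "walkin (stepL F d g) UNIV q (u @ v) q'" by (rule walkin_app[OF u(1) _ v(1)]) simp
  moreover have "u \<in> PL" by (rule walk_PL[OF u(1)]) (rule step_pom)
  moreover have "v \<in> PL" by (rule walk_PL[OF v(1)]) (rule step_pom)
  ultimately have "walkin (stepL F d g) UNIV q (u @ v) q' \<and> pseq U V = flat (u @ v)"
    using u(2) v(2) by (simp add: flat_append)
  then show ?case by (intro exI[of _ "u @ v"])
next
  case (run_par q' q qs Us)
  have r: "\<forall>i<length qs. \<exists>qf\<in>F. run F d g (qs!i) (Us!i) qf" using run_par(3) by blast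
  then have "ppar_list Us \<in> stepL F d g q q'" unfolding stepL_def using run_par(1,2) by blast
  then have "walkin (stepL F d g) UNIV q [ppar_list Us] q'" by (rule wi_one)
  moreover have "is_pomset (ppar_list Us)" using \<open>ppar_list Us \<in> stepL F d g q q'\<close> by (rule step_pom)
  then have "ppar_list Us = flat [ppar_list Us]" by (rule flat_single[symmetric])
  ultimately show ?case by (intro exI[of _ "[ppar_list Us]"] conjI)
qed

lemma lang_walk: "lang F d g q = (\<Union>p'\<in>F. flat ` {Us. walkin (stepL F d g) UNIV q Us p'})"
proof
  show "lang F d g q \<subseteq> (\<Union>p'\<in>F. flat ` {Us. walkin (stepL F d g) UNIV q Us p'})"
  proof
    fix U assume "U \<in> lang F d g q"
    then obtain p' where p': "p' \<in> F" "run F d g q U p'" unfolding lang_def by blast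
    then obtain Us where "walkin (stepL F d g) UNIV q Us p'" "U = flat Us" using run_walk by meson
    then have "U \<in> flat ` {Us. walkin (stepL F d g) UNIV q Us p'}" by simp
    then show "U \<in> (\<Union>p'\<in>F. flat ` {Us. walkin (stepL F d g) UNIV q Us p'})"
      using p'(1) by (rule UN_I[rotated])
  qed
next
  show "(\<Union>p'\<in>F. flat ` {Us. walkin (stepL F d g) UNIV q Us p'}) \<subseteq> lang F d g q"
  proof
    fix U assume "U \<in> (\<Union>p'\<in>F. flat ` {Us. walkin (stepL F d g) UNIV q Us p'})"
    then obtain p' Us where 1: "p' \<in> F" "walkin (stepL F d g) UNIV q Us p'" "U = flat Us" by blast
    have "run F d g q U p'" using walk_run[OF 1(2)] 1(3) by simp
    then show "U \<in> lang F d g q" unfolding lang_def using 1(1) by blast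
  qed
qed


lemma fin_union: "finite I \<Longrightarrow> (\<forall>i\<in>I. \<exists>e. sem e = L i) \<Longrightarrow> \<exists>e. sem e = (\<Union>i\<in>I. L i)"
proof (induction I rule: finite_induct)
  case empty
  have "sem Zero = (\<Union>i\<in>{}. L i)" by simp
  then show ?case by (rule exI)
next
  case (insert x I)
  then obtain e where e: "sem e = (\<Union>i\<in>I. L i)" by blast
  obtain f where f: "sem f = L x" using insert.prems by blast
  have "sem (Plus f e) = (\<Union>i\<in>insert x I. L i)" using e f by simp
  then show ?case by (rule exI)
qed

definition forkE :: "('q \<Rightarrow> 'a srexp) \<Rightarrow> 'q list \<Rightarrow> 'a srexp" where
  "forkE E qs = foldr (\<lambda>r acc. Par (E r) acc) qs One"

lemma fork_sem:
  assumes "\<forall>r\<in>set qs. sem (E r) = lang F d g r"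
  shows "sem (forkE E qs) = {ppar_list Us | Us. length Us = length qs \<and>
        (\<forall>i<length qs. \<exists>qf\<in>F. run F d g (qs!i) (Us!i) qf)}"
  using assms
proof (induction qs)
  case Nil
  show ?case unfolding forkE_def by auto
next
  case (Cons r qs)
  have IH: "sem (forkE E qs) = {ppar_list Us | Us. length Us = length qs \<and>
        (\<forall>i<length qs. \<exists>qf\<in>F. run F d g (qs!i) (Us!i) qf)}" using Cons by simp
  have er: "sem (E r) = lang F d g r" using Cons.prems by simp
  have 1: "sem (forkE E (r # qs)) = lpar (sem (E r)) (sem (forkE E qs))" unfolding forkE_def by simp
  have P: "\<And>U Us. (length (U # Us) = length (r # qs) \<and>
        (\<forall>i<length (r # qs). \<exists>qf\<in>F. run F d g ((r # qs)!i) ((U # Us)!i) qf)) \<longleftrightarrow>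
        U \<in> lang F d g r \<and> (length Us = length qs \<and>
        (\<forall>i<length qs. \<exists>qf\<in>F. run F d g (qs!i) (Us!i) qf))"
    unfolding lang_def by (simp add: All_less_Suc2) blast
  show ?case
  proof
    show "sem (forkE E (r # qs)) \<subseteq> {ppar_list Us | Us. length Us = length (r # qs) \<and>
        (\<forall>i<length (r # qs). \<exists>qf\<in>F. run F d g ((r # qs)!i) (Us!i) qf)}"
    proof
      fix x assume "x \<in> sem (forkE E (r # qs))"
      then obtain U V where "x = ppar U V" "U \<in> lang F d g r" "V \<in> sem (forkE E qs)"
        unfolding 1 lpar_def er by blast
      then obtain Us where "V = ppar_list Us" "length Us = length qs \<and>
        (\<forall>i<length qs. \<exists>qf\<in>F. run F d g (qs!i) (Us!i) qf)" unfolding IH by blast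
      then have "length (U # Us) = length (r # qs) \<and>
        (\<forall>i<length (r # qs). \<exists>qf\<in>F. run F d g ((r # qs)!i) ((U # Us)!i) qf)"
        using iffD2[OF P[of U Us]] \<open>U \<in> lang F d g r\<close> by blast
      moreover have "x = ppar_list (U # Us)" using \<open>x = ppar U V\<close> \<open>V = ppar_list Us\<close> by simp
      ultimately have "x = ppar_list (U # Us) \<and> length (U # Us) = length (r # qs) \<and>
        (\<forall>i<length (r # qs). \<exists>qf\<in>F. run F d g ((r # qs)!i) ((U # Us)!i) qf)" by blast
      then show "x \<in> {ppar_list Us | Us. length Us = length (r # qs) \<and>
        (\<forall>i<length (r # qs). \<exists>qf\<in>F. run F d g ((r # qs)!i) (Us!i) qf)}" by blast
    qed
  next
    show "{ppar_list Us | Us. length Us = length (r # qs) \<and>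
        (\<forall>i<length (r # qs). \<exists>qf\<in>F. run F d g ((r # qs)!i) (Us!i) qf)} \<subseteq> sem (forkE E (r # qs))"
    proof
      fix x assume "x \<in> {ppar_list Us | Us. length Us = length (r # qs) \<and>
        (\<forall>i<length (r # qs). \<exists>qf\<in>F. run F d g ((r # qs)!i) (Us!i) qf)}"
      then obtain Us where x: "x = ppar_list Us" "length Us = length (r # qs) \<and>
        (\<forall>i<length (r # qs). \<exists>qf\<in>F. run F d g ((r # qs)!i) (Us!i) qf)" by blast
      then obtain U Us' where Us: "Us = U # Us'" by (cases Us) auto
      have "U \<in> lang F d g r \<and> (length Us' = length qs \<and>
        (\<forall>i<length qs. \<exists>qf\<in>F. run F d g (qs!i) (Us'!i) qf))" using x(2) P unfolding Us by blast
      then have "U \<in> sem (E r)" "ppar_list Us' \<in> sem (forkE E qs)" unfolding er IH by blast+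
      moreover have "x = ppar U (ppar_list Us')" using x(1) Us by simp
      ultimately show "x \<in> sem (forkE E (r # qs))" unfolding 1 lpar_def by blast
    qed
  qed
qed

lemma finite_mset_pre:
  assumes "finite M" shows "finite {qs :: ('q::finite) list. mset qs \<in> M}"
proof -
  have "{qs. mset qs \<in> M} \<subseteq> (\<Union>\<phi>\<in>M. {qs. set qs \<subseteq> UNIV \<and> length qs = size \<phi>})" by auto
  moreover have "finite (\<Union>\<phi>\<in>M. {qs :: 'q list. set qs \<subseteq> UNIV \<and> length qs = size \<phi>})"
    using assms by (intro finite_UN_I finite_lists_length_eq) simp_all
  ultimately show ?thesis by (rule finite_subset)
qed

lemma step_supp: "U \<in> stepL F d g p m \<Longrightarrow> (m, p) \<in> supp_step d g"
  unfolding stepL_def supp_step_def by auto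

lemma walkin_monoS: "walkin S X p Us p' \<Longrightarrow> (\<And>p p'. S p p' \<subseteq> T p p') \<Longrightarrow> walkin T X p Us p'"
  by (induction rule: walkin.induct) (auto intro: walkin.intros)

lemma walkin_restrict:
  "walkin (stepL F d g) X p Us p' \<Longrightarrow> supports d g p q \<Longrightarrow>
   walkin (\<lambda>p p'. if supports d g p q then stepL F d g p p' else {}) X p Us p'"
proof (induction rule: walkin.induct)
  case (wi_nil p) show ?case by (rule walkin.wi_nil)
next
  case (wi_one U p p') then show ?case by (intro walkin.wi_one) simp
next
  case (wi_cons U p m Us p')
  have "(m, p) \<in> supp_step d g" using wi_cons.hyps(1) by (rule step_supp)
  then have "supports d g m q" using wi_cons.prems unfolding supports_def
    by (rule converse_rtrancl_into_rtrancl)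
  then have "walkin (\<lambda>p p'. if supports d g p q then stepL F d g p p' else {}) X m Us p'"
    by (rule wi_cons.IH)
  moreover have "U \<in> (if supports d g p q then stepL F d g p m else {})" using wi_cons.hyps(1) wi_cons.prems by simp
  ultimately show ?case using wi_cons.hyps(2) by (intro walkin.wi_cons)
qed

lemma card_decrease:
  fixes d :: "'q::finite \<Rightarrow> 'a \<Rightarrow> 'q set"
  assumes fa: "fork_acyclic d g" and pq: "supports d g p q" and gp: "g p \<phi> \<noteq> {}" and r: "r \<in># \<phi>"
  shows "card {x. supports d g x r} < card {x. supports d g x q}"
proof (rule psubset_card_mono)
  show "finite {x. supports d g x q}" by simp
  have rp: "(r, p) \<in> supp_step d g" unfolding supp_step_def using gp r by blast
  have sub: "{x. supports d g x r} \<subseteq> {x. supports d g x q}"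
  proof
    fix x assume "x \<in> {x. supports d g x r}"
    then have "(x, r) \<in> (supp_step d g)\<^sup>*" unfolding supports_def by simp
    also have "(r, p) \<in> (supp_step d g)\<^sup>*" using rp by simp
    also have "(p, q) \<in> (supp_step d g)\<^sup>*" using pq unfolding supports_def by simp
    finally show "x \<in> {x. supports d g x q}" unfolding supports_def by simp
  qed
  have "\<not> supports d g q r"
  proof
    assume "supports d g q r"
    then have "(p, r) \<in> (supp_step d g)\<^sup>*" using pq unfolding supports_def by simp
    then have "supports d g p r" unfolding supports_def by simp
    then show False using fa gp r unfolding fork_acyclic_def by blast
  qed
  moreover have "q \<in> {x. supports d g x q}" unfolding supports_def by simp
  ultimately show "{x. supports d g x r} \<subset> {x. supports d g x q}" using sub by blast
qed


theorem theorem8p4: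
  fixes F :: "'q::finite set"
    and d :: "'q \<Rightarrow> 'a::finite \<Rightarrow> 'q set"
    and g :: "'q \<Rightarrow> 'q multiset \<Rightarrow> 'q set"
  assumes "pomset_automaton g"
    and "fork_acyclic d g"
  shows "\<forall>q. \<exists>e :: 'a srexp. sem e = lang F d g q"
proof
  fix q :: 'q
  show "\<exists>e :: 'a srexp. sem e = lang F d g q"
  proof (induction q rule: measure_induct_rule[where f="\<lambda>q. card {x. supports d g x q}"])
    case (less q)
    have "\<forall>r. \<exists>e. card {x. supports d g x r} < card {x. supports d g x q} \<longrightarrow> sem e = lang F d g r"
      using less by blast
    then obtain E where E: "\<And>r. card {x. supports d g x r} < card {x. supports d g x q} \<Longrightarrow> sem (E r) = lang F d g r"
      by metis
    define S' where "S' = (\<lambda>p p'. if supports d g p q then stepL F d g p p' else {})"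
    have S'e: "\<forall>p p'. \<exists>e. sem e = S' p p'"
    proof (intro allI)
      fix p p'
      show "\<exists>e. sem e = S' p p'"
      proof (cases "supports d g p q")
        case False
        then have "sem Zero = S' p p'" unfolding S'_def by simp
        then show ?thesis by (rule exI)
      next
        case True
        have A1: "{patom a | a. p' \<in> d p a} = (\<Union>a\<in>{a. p' \<in> d p a}. sem (Sym a))" by auto
        have "\<exists>e. sem e = (\<Union>a\<in>{a. p' \<in> d p a}. sem (Sym a))"
          by (rule fin_union) (simp, metis)
        then obtain e1 where e1: "sem e1 = {patom a | a. p' \<in> d p a}" unfolding A1 by blast
        define QS where "QS = {qs. p' \<in> g p (mset qs)}"
        have fQS: "finite QS"
        proof -
          have "finite {\<phi>. g p \<phi> \<noteq> {}}" using assms(1) unfolding pomset_automaton_def by blast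
          then have "finite {qs :: 'q list. mset qs \<in> {\<phi>. g p \<phi> \<noteq> {}}}" by (rule finite_mset_pre)
          moreover have "QS \<subseteq> {qs. mset qs \<in> {\<phi>. g p \<phi> \<noteq> {}}}" unfolding QS_def by auto
          ultimately show ?thesis using finite_subset by blast
        qed
        define LHS where "LHS = {ppar_list Us | Us qs. p' \<in> g p (mset qs) \<and> length Us = length qs \<and>
            (\<forall>i<length qs. \<exists>qf\<in>F. run F d g (qs!i) (Us!i) qf)}"
        define RQ where "RQ = (\<lambda>qs. {ppar_list Us | Us. length Us = length qs \<and>
            (\<forall>i<length qs. \<exists>qf\<in>F. run F d g (qs!i) (Us!i) qf)})"
        have A2: "LHS = (\<Union>qs\<in>QS. RQ qs)"
        proof
          show "LHS \<subseteq> (\<Union>qs\<in>QS. RQ qs)"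
          proof
            fix x assume "x \<in> LHS"
            then obtain Us qs where 1: "x = ppar_list Us" "p' \<in> g p (mset qs)" "length Us = length qs"
              "\<forall>i<length qs. \<exists>qf\<in>F. run F d g (qs!i) (Us!i) qf" unfolding LHS_def by blast
            then have "qs \<in> QS" unfolding QS_def by simp
            moreover have "x \<in> RQ qs" unfolding RQ_def using 1(1,3,4) by blast
            ultimately show "x \<in> (\<Union>qs\<in>QS. RQ qs)" by (rule UN_I)
          qed
          show "(\<Union>qs\<in>QS. RQ qs) \<subseteq> LHS"
          proof
            fix x assume "x \<in> (\<Union>qs\<in>QS. RQ qs)"
            then obtain qs where "qs \<in> QS" "x \<in> RQ qs" by (rule UN_E)
            then obtain Us where 1: "x = ppar_list Us" "length Us = length qs"
              "\<forall>i<length qs. \<exists>qf\<in>F. run F d g (qs!i) (Us!i) qf" unfolding RQ_def by blast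
            have "p' \<in> g p (mset qs)" using \<open>qs \<in> QS\<close> unfolding QS_def by simp
            then show "x \<in> LHS" unfolding LHS_def using 1 by blast
          qed
        qed
        have "\<forall>qs\<in>QS. \<exists>e. sem e = RQ qs"
        proof
          fix qs assume "qs \<in> QS"
          then have gp: "g p (mset qs) \<noteq> {}" unfolding QS_def by blast
          have "\<forall>r\<in>set qs. sem (E r) = lang F d g r"
          proof
            fix r assume "r \<in> set qs"
            then have "r \<in># mset qs" by simp
            then have "card {x. supports d g x r} < card {x. supports d g x q}"
              by (rule card_decrease[OF assms(2) True gp])
            then show "sem (E r) = lang F d g r" by (rule E)
          qed
          then show "\<exists>e. sem e = RQ qs" unfolding RQ_def
            by (intro exI[of _ "forkE E qs"] fork_sem)
        qed
        then have "\<exists>e. sem e = (\<Union>qs\<in>QS. RQ qs)" by (rule fin_union[OF fQS])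
        then obtain e2 where "sem e2 = (\<Union>qs\<in>QS. RQ qs)" by (rule exE)
        then have e2: "sem e2 = LHS" using A2 by simp
        have "sem (Plus e1 e2) = S' p p'" unfolding S'_def stepL_def using True e1 e2 unfolding LHS_def by simp
        then show ?thesis by (rule exI)
      qed
    qed
    have W: "\<And>p'. {Us. walkin (stepL F d g) UNIV q Us p'} = {Us. walkin S' UNIV q Us p'}"
    proof
      fix p'
      show "{Us. walkin (stepL F d g) UNIV q Us p'} \<subseteq> {Us. walkin S' UNIV q Us p'}"
      proof
        fix Us assume "Us \<in> {Us. walkin (stepL F d g) UNIV q Us p'}"
        then have "walkin (stepL F d g) UNIV q Us p'" by simp
        then have "walkin S' UNIV q Us p'" unfolding S'_def
          by (rule walkin_restrict) (simp add: supports_def)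
        then show "Us \<in> {Us. walkin S' UNIV q Us p'}" by simp
      qed
      show "{Us. walkin S' UNIV q Us p'} \<subseteq> {Us. walkin (stepL F d g) UNIV q Us p'}"
      proof
        fix Us assume "Us \<in> {Us. walkin S' UNIV q Us p'}"
        then have "walkin S' UNIV q Us p'" by simp
        then have "walkin (stepL F d g) UNIV q Us p'"
          by (rule walkin_monoS) (simp add: S'_def)
        then show "Us \<in> {Us. walkin (stepL F d g) UNIV q Us p'}" by simp
      qed
    qed
    have "\<forall>p'\<in>F. \<exists>e. sem e = flat ` {Us. walkin S' UNIV q Us p'}"
    proof
      fix p' assume "p' \<in> F"
      have "reg {Us. walkin S' UNIV q Us p'}" by (rule kleene) (simp_all add: S'e)
      then show "\<exists>e. sem e = flat ` {Us. walkin S' UNIV q Us p'}" using reg_expr by blast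
    qed
    then have "\<exists>e. sem e = (\<Union>p'\<in>F. flat ` {Us. walkin S' UNIV q Us p'})"
      by (rule fin_union[rotated]) simp
    then show ?case unfolding lang_walk W .
  qed
qed

end
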